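(* Let $d,r,k$ be positive integers and $\nu>0$. Let $M_\sharp=X_\sharp X_\sharp^\top$ with $X_\sharp\in\mathbb{R}^{d\times r}$ of rank $r$, $\|X_\sharp\|_{\mathrm{op}}\le1$ and $\|X_\sharp\|_{2,\infty}\le\sqrt{\nu r/d}$; let $S_\sharp\in\mathbb{R}^{d\times d}$ be symmetric with at most $k$ nonzero entries per column; and let $W=M_\sharp+S_\sharp$. Let $\mathcal{X}=\{X\in\mathbb{R}^{d\times r}:\|X\|_{2,\infty}\le\sqrt{\nu r/d}\}$ and $\mathcal{S}=\{S\in\mathbb{R}^{d\times d}\text{ symmetric}:\|Se_i\|_1\le\|S_\sharp e_i\|_1\ \forall i\}$. Define $F((X,S))=\|XX^\top+S-W\|_F$ and $F_Y((X,S))=\|YY^\top+Y(X-Y)^\top+(X-Y)Y^\top+S-W\|_F$. Then for all $X,Y\in\mathcal{X}$, $S\in\mathcal{S}$: $$F((X,S))^2\ge\Big(\tfrac12\sigma_r^2(X_\sharp)-10\sqrt{\tfrac{\nu rk}{d}}\Big)\Big(\mathrm{dist}(X,\mathcal{D}^*(M_\sharp))^2+\|S-S_\sharp\|_F^2\Big),$$ $$|F((X,S))-F_Y((X,S))|\le\|X-Y\|_F^2,$$ and for all $X_1,X_2\in\mathcal{X}$, $S_1,S_2\in\mathcal{S}$, $$|F((X_1,S_1))-F((X_2,S_2))|\le2\sqrt{\nu r}\|X_1-X_2\|_F+\|S_1-S_2\|_F.$$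
   Context: $\|X\|_{2,\infty}$ is the maximum Euclidean row norm; $\|\cdot\|_{\mathrm{op}}$ the spectral norm; $\sigma_r$ the $r$-th largest singular value; $e_i$ the $i$-th standard basis vector. $\mathcal{D}^*(M_\sharp)=\{X_\sharp R:R\in O(r)\}$ and $\mathrm{dist}$ is Frobenius distance. *)

theory Defs
  imports "HOL-Analysis.Analysis"
begin

text \<open>Matrices in R^{m x n} are rendered as real^'n^'m (rows indexed by 'm).
  The Frobenius norm is the library norm on real^'n^'m.\<close>

definition norm_2inf :: "real^'n^'m \<Rightarrow> real" where
  "norm_2inf X = Max (range (\<lambda>i. norm (X $ i)))"

definition op_norm :: "real^'n^'m \<Rightarrow> real" where
  "op_norm X = onorm (\<lambda>x. X *v x)"

definition col_l1 :: "real^'n^'m \<Rightarrow> 'n \<Rightarrow> real" where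
  "col_l1 S i = (\<Sum>j\<in>UNIV. \<bar>S $ j $ i\<bar>)"

text \<open>sigma_r(X) for X in R^{d x r} (r = number of columns): the r-th largest
  singular value, i.e. the smallest of the r singular values, i.e. the square
  root of the smallest eigenvalue of the r x r matrix X^T X.\<close>
definition sigma_r :: "real^'r^'d \<Rightarrow> real" where
  "sigma_r X = sqrt (Min {c. \<exists>v. v \<noteq> 0 \<and> (transpose X ** X) *v v = c *s v})"

text \<open>Frobenius distance from X to D*(M) = {X0 R : R in O(r)}.\<close>
definition dist_Dstar :: "real^'r^'d \<Rightarrow> real^'r^'d \<Rightarrow> real" where
  "dist_Dstar X X0 = Inf ((\<lambda>R. norm (X - X0 ** R)) ` {R :: real^'r^'r. orthogonal_matrix R})"

end

theory Submission
  imports Defs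
begin


lemma mm_add_r: "((A::real^'k^'m) + B) ** (C::real^'n^'k) = A ** C + B ** C"
  by (vector matrix_matrix_mult_def sum.distrib[symmetric] field_simps)
lemma mm_diff_r: "((A::real^'k^'m) - B) ** (C::real^'n^'k) = A ** C - B ** C"
  by (vector matrix_matrix_mult_def sum_subtractf[symmetric] field_simps)
lemma mm_diff_l: "(A::real^'k^'m) ** ((B::real^'n^'k) - C) = A ** B - A ** C"
  by (vector matrix_matrix_mult_def sum_subtractf[symmetric] field_simps)
lemma tr_add: "transpose ((A::real^'n^'m) + B) = transpose A + transpose B"
  by (vector transpose_def)
lemma tr_diff: "transpose ((A::real^'n^'m) - B) = transpose A - transpose B"
  by (vector transpose_def)

lemma mm_row: "((A::real^'k^'m) ** (B::real^'n^'k)) $ i = A $ i v* B"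
  by (simp add: vec_eq_iff matrix_matrix_mult_def vector_matrix_mult_def)

lemma mm_entry: "((A::real^'k^'m) ** transpose (B::real^'k^'n)) $ i $ j = A $ i \<bullet> B $ j"
  by (simp add: matrix_matrix_mult_def transpose_def inner_vec_def)

lemma inner_mat: "(A::real^'n^'m) \<bullet> B = (\<Sum>i\<in>UNIV. \<Sum>j\<in>UNIV. A$i$j * B$i$j)"
  by (simp add: inner_vec_def)

lemma adj1: "((A::real^'k^'m) ** (B::real^'n^'k)) \<bullet> C = A \<bullet> (C ** transpose B)"
  unfolding inner_mat
  apply (simp add: matrix_matrix_mult_def transpose_def sum_distrib_left sum_distrib_right
      mult_ac)
  apply (rule sum.cong[OF refl])
  apply (rule sum.swap)
  done

lemma sum3: "(\<Sum>i\<in>A. \<Sum>j\<in>B. \<Sum>k\<in>C. f i j k) = (\<Sum>j\<in>B. \<Sum>k\<in>C. \<Sum>i\<in>A. f i j k)"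
proof -
  have "(\<Sum>i\<in>A. \<Sum>j\<in>B. \<Sum>k\<in>C. f i j k) = (\<Sum>j\<in>B. \<Sum>i\<in>A. \<Sum>k\<in>C. f i j k)" by (rule sum.swap)
  also have "\<dots> = (\<Sum>j\<in>B. \<Sum>k\<in>C. \<Sum>i\<in>A. f i j k)" by (rule sum.cong[OF refl], rule sum.swap)
  finally show ?thesis .
qed

lemma adj2: "((A::real^'k^'m) ** (B::real^'n^'k)) \<bullet> C = B \<bullet> (transpose A ** C)"
  unfolding inner_mat
  apply (simp add: matrix_matrix_mult_def transpose_def sum_distrib_left sum_distrib_right
      mult_ac)
  apply (rule trans[OF sum3])
  apply (rule trans[OF sum.swap])
  apply (simp add: mult_ac)
  done

lemma inner_tr: "transpose (A::real^'n^'m) \<bullet> transpose B = A \<bullet> B"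
  unfolding inner_mat by (simp add: transpose_def) (rule sum.swap)

lemma norm_tr: "norm (transpose (A::real^'n^'m)) = norm A"
  by (simp add: norm_eq_sqrt_inner inner_tr)

lemma norm_sq_rows: "(norm (A::real^'n^'m))\<^sup>2 = (\<Sum>i\<in>UNIV. (norm (A$i))\<^sup>2)"
  by (simp add: power2_norm_eq_inner inner_vec_def)

lemma mv_norm: "norm ((M::real^'n^'m) *v x) \<le> norm M * norm x"
proof -
  have "(norm (M *v x))\<^sup>2 = (\<Sum>j\<in>UNIV. (M$j \<bullet> x)\<^sup>2)"
    unfolding power2_norm_eq_inner by (simp add: inner_vec_def matrix_vector_mul_component power2_eq_square)
  also have "\<dots> \<le> (\<Sum>j\<in>UNIV. (norm (M$j))\<^sup>2 * (norm x)\<^sup>2)"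
    apply (rule sum_mono)
    subgoal for j using Cauchy_Schwarz_ineq[of "M$j" x] by (simp add: power2_norm_eq_inner)
    done
  also have "\<dots> = (norm M * norm x)\<^sup>2"
    by (simp add: norm_sq_rows power_mult_distrib sum_distrib_right)
  finally show ?thesis by (rule power2_le_imp_le) simp_all
qed

lemma frob_submult: "norm ((A::real^'k^'m) ** (B::real^'n^'k)) \<le> norm A * norm B"
proof -
  have "(norm (A ** B))\<^sup>2 = (\<Sum>i\<in>UNIV. (norm (transpose B *v A$i))\<^sup>2)"
    by (simp add: norm_sq_rows mm_row)
  also have "\<dots> \<le> (\<Sum>i\<in>UNIV. (norm B)\<^sup>2 * (norm (A$i))\<^sup>2)"
    apply (rule sum_mono)
    subgoal for i
    proof -
      have "norm (transpose B *v A$i) \<le> norm B * norm (A$i)" using mv_norm[of "transpose B"] norm_tr[of B] by simp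
      hence "(norm (transpose B *v A$i))\<^sup>2 \<le> (norm B * norm (A$i))\<^sup>2" by (rule power_mono) simp
      thus ?thesis by (simp add: power_mult_distrib)
    qed
    done
  also have "\<dots> = (norm A * norm B)\<^sup>2"
    by (simp add: norm_sq_rows power_mult_distrib sum_distrib_left mult_ac)
  finally show ?thesis by (rule power2_le_imp_le) simp_all
qed

lemma orth_norm: assumes "orthogonal_matrix (R::real^'n^'n)" shows "norm (R *v x) = norm x"
proof -
  have "(R *v x) \<bullet> (R *v x) = x \<bullet> x"
    using assms dot_lmul_matrix[of x "transpose R" "R *v x"]
    by (simp add: matrix_vector_mul_assoc orthogonal_matrix)
  thus ?thesis by (simp add: norm_eq_sqrt_inner)
qed



lemma gram_id: "x \<bullet> ((transpose X ** X) *v y) = (X *v x) \<bullet> ((X::real^'r^'d) *v y)"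
proof -
  have "(transpose X ** X) *v y = (X *v y) v* X"
    by (simp flip: matrix_vector_mul_assoc)
  hence "x \<bullet> ((transpose X ** X) *v y) = ((X *v y) v* X) \<bullet> x" by (simp add: inner_commute)
  also have "\<dots> = (X *v y) \<bullet> (X *v x)" by (rule dot_lmul_matrix)
  finally show ?thesis by (simp add: inner_commute)
qed

lemma eig_finite:
  fixes X :: "real^'r^'d"
  shows "finite {c. \<exists>v. v \<noteq> 0 \<and> (transpose X ** X) *v v = c *s v}"
proof -
  define A where "A = transpose X ** X"
  define E where "E = {c. \<exists>v. v \<noteq> 0 \<and> A *v v = c *s v}"
  define f where "f c = (SOME v. v \<noteq> 0 \<and> A *v v = c *s v)" for c
  have f: "f c \<noteq> 0 \<and> A *v f c = c *\<^sub>R f c" if "c \<in> E" for c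
    using that unfolding E_def f_def scalar_mult_eq_scaleR by (metis (mono_tags, lifting) someI_ex mem_Collect_eq)
  have sym: "x \<bullet> (A *v y) = y \<bullet> (A *v x)" for x y
    unfolding A_def gram_id by (simp add: inner_commute)
  have orth: "f c \<bullet> f c' = 0" if "c \<in> E" "c' \<in> E" "c \<noteq> c'" for c c'
  proof -
    have "c * (f c' \<bullet> f c) = f c' \<bullet> (A *v f c)" using f[OF that(1)] by simp
    also have "\<dots> = f c \<bullet> (A *v f c')" by (rule sym)
    also have "\<dots> = c' * (f c \<bullet> f c')" using f[OF that(2)] by simp
    finally have "(c - c') * (f c \<bullet> f c') = 0" by (simp add: inner_commute algebra_simps)
    thus ?thesis using that(3) by simp
  qed
  have inj: "inj_on f E"
  proof (rule inj_onI)
    fix c c' assume "c \<in> E" "c' \<in> E" "f c = f c'"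
    thus "c = c'" using orth f by (metis inner_eq_zero_iff)
  qed
  have "independent (f ` E)"
    apply (rule pairwise_orthogonal_independent)
    unfolding pairwise_def orthogonal_def using orth f by auto
  hence "finite (f ` E)" by (rule finiteI_independent)
  hence "finite E" using inj finite_imageD by blast
  thus ?thesis unfolding E_def A_def .
qed



lemma quad_nonneg_zero:
  fixes Y Q :: real
  assumes "\<And>t. 0 \<le> 2*t*Y + t\<^sup>2*Q" "0 \<le> Y" "0 \<le> Q"
  shows "Y = 0"
proof (rule ccontr)
  assume "Y \<noteq> 0" hence Y: "Y > 0" using assms by simp
  define d where "d = Q + 1"
  define t where "t = - Y / d"
  have Q1: "d > 0" using assms by (simp add: d_def)
  have "0 \<le> 2*t*Y + t\<^sup>2*Q" by (rule assms(1))
  also have "2*t*Y + t\<^sup>2*Q = (Y\<^sup>2*Q - 2*Y\<^sup>2*d) / d\<^sup>2"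
    unfolding t_def using Q1 by (simp add: field_simps power2_eq_square)
  finally have "0 \<le> (Y\<^sup>2*Q - 2*Y\<^sup>2*d) / d\<^sup>2" .
  hence "0 \<le> Y\<^sup>2*Q - 2*Y\<^sup>2*d" using Q1 by (simp add: zero_le_divide_iff)
  hence "0 \<le> Y\<^sup>2*Q - 2*Y\<^sup>2*(Q+1)" by (simp add: d_def)
  moreover have "Y\<^sup>2 > 0" using Y by simp
  moreover have "Y\<^sup>2*Q - 2*Y\<^sup>2*(Q+1) = - (Y\<^sup>2 * (Q + 2))" by (simp add: algebra_simps)
  moreover have "Y\<^sup>2 * (Q + 2) > 0" using \<open>Y\<^sup>2 > 0\<close> assms(3) by simp
  ultimately show False by linarith
qed

lemma sigma_lemma:
  fixes Xs :: "real^'r^'d"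
  assumes "op_norm Xs \<le> 1"
  shows "0 \<le> (sigma_r Xs)\<^sup>2" "(sigma_r Xs)\<^sup>2 \<le> 1"
    "\<And>x. (sigma_r Xs)\<^sup>2 * (norm x)\<^sup>2 \<le> (norm (Xs *v x))\<^sup>2"
proof -
  define A where "A = transpose Xs ** Xs"
  define E where "E = {c. \<exists>v. v \<noteq> 0 \<and> A *v v = c *s v}"
  have finE: "finite E" unfolding E_def A_def by (rule eig_finite)
  have cont: "continuous_on (sphere (0::real^'r) 1) (\<lambda>x. (norm (Xs *v x))\<^sup>2)"
    by (intro continuous_intros linear_continuous_on matrix_vector_mul_bounded_linear)
  have ne: "sphere (0::real^'r) 1 \<noteq> {}"
  proof -
    obtain i :: 'r where True by simp
    have "axis i 1 \<in> sphere (0::real^'r) 1" by simp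
    thus ?thesis by blast
  qed
  obtain w where w: "w \<in> sphere 0 1" and wmin: "\<And>y. y \<in> sphere 0 1 \<Longrightarrow> (norm (Xs *v w))\<^sup>2 \<le> (norm (Xs *v y))\<^sup>2"
    using continuous_attains_inf[OF compact_sphere ne cont] by blast
  define m where "m = (norm (Xs *v w))\<^sup>2"
  have nw: "norm w = 1" using w by simp
  have ww: "w \<bullet> w = 1" by (metis nw power2_norm_eq_inner one_power2)
  have hom: "m * (norm x)\<^sup>2 \<le> (norm (Xs *v x))\<^sup>2" for x
  proof (cases "x = 0")
    case True thus ?thesis by simp
  next
    case False
    define y where "y = (1 / norm x) *\<^sub>R x"
    have "y \<in> sphere 0 1" using False by (simp add: y_def)
    hence "m \<le> (norm (Xs *v y))\<^sup>2" using wmin m_def by simp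
    also have "Xs *v y = (1 / norm x) *\<^sub>R (Xs *v x)" by (simp add: y_def matrix_vector_mult_scaleR)
    also have "(norm \<dots>)\<^sup>2 = (norm (Xs *v x))\<^sup>2 / (norm x)\<^sup>2" by (simp add: power_divide)
    finally show ?thesis using False by (simp add: field_simps)
  qed
  have mE: "m \<in> E"
  proof -
    define y where "y = A *v w - m *\<^sub>R w"
    define Y where "Y = y \<bullet> y"
    define Q where "Q = (norm (Xs *v y))\<^sup>2 - m * (norm y)\<^sup>2"
    have key: "(norm (Xs *v (w + t *\<^sub>R y)))\<^sup>2 - m * (norm (w + t *\<^sub>R y))\<^sup>2 = 2*t*Y + t\<^sup>2*Q" for t
    proof -
      have g: "(Xs *v w) \<bullet> (Xs *v y) = y \<bullet> (A *v w)"
        unfolding A_def gram_id by (simp add: inner_commute)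
      have e1: "(norm (Xs *v (w + t *\<^sub>R y)))\<^sup>2 = (norm (Xs *v w))\<^sup>2 + 2*t*((Xs *v w) \<bullet> (Xs *v y)) + t\<^sup>2 * (norm (Xs *v y))\<^sup>2"
        unfolding power2_norm_eq_inner by (simp add: matrix_vector_right_distrib matrix_vector_mult_scaleR
            inner_add_left inner_add_right inner_commute power2_eq_square algebra_simps)
      have e2: "(norm (w + t *\<^sub>R y))\<^sup>2 = 1 + 2*t*(w \<bullet> y) + t\<^sup>2 * (norm y)\<^sup>2"
        using ww unfolding power2_norm_eq_inner by (simp add: inner_add_left inner_add_right inner_commute
            power2_eq_square algebra_simps)
      have e3: "y \<bullet> (A *v w) = Y + m * (w \<bullet> y)"
        by (simp add: Y_def y_def inner_diff_left inner_diff_right inner_commute algebra_simps) 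
      show ?thesis unfolding Q_def e1 e2 g e3 m_def[symmetric] by (simp add: algebra_simps)
    qed
    have "Y = 0"
    proof (rule quad_nonneg_zero)
      show "0 \<le> 2*t*Y + t\<^sup>2*Q" for t using hom[of "w + t *\<^sub>R y"] key[of t] by simp
      show "0 \<le> Y" by (simp add: Y_def)
      show "0 \<le> Q" using hom[of y] by (simp add: Q_def)
    qed
    hence "A *v w = m *s w" by (simp add: Y_def y_def scalar_mult_eq_scaleR)
    moreover have "w \<noteq> 0" using nw by auto
    ultimately show ?thesis unfolding E_def by blast
  qed
  define l where "l = Min E"
  have lE: "l \<in> E" unfolding l_def using finE mE Min_in by blast
  have lm: "l \<le> m" unfolding l_def using finE mE by simp
  have l0: "0 \<le> l"
  proof -
    obtain v where v: "v \<noteq> 0" "A *v v = l *s v" using lE unfolding E_def by blast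
    have "l * (v \<bullet> v) = v \<bullet> (A *v v)" using v by (simp add: scalar_mult_eq_scaleR)
    also have "\<dots> = (norm (Xs *v v))\<^sup>2" unfolding A_def gram_id by (simp add: power2_norm_eq_inner)
    finally have "0 \<le> l * (v \<bullet> v)" by simp
    moreover have "0 < v \<bullet> v" using v by simp
    ultimately show ?thesis by (simp add: zero_le_mult_iff)
  qed
  have m1: "m \<le> 1"
  proof -
    have "norm (Xs *v w) \<le> op_norm Xs * norm w"
      unfolding op_norm_def by (rule onorm[OF matrix_vector_mul_bounded_linear])
    hence "norm (Xs *v w) \<le> 1" using assms nw by simp
    thus ?thesis unfolding m_def by (simp add: power_le_one)
  qed
  have "sigma_r Xs = sqrt l" unfolding sigma_r_def l_def E_def A_def ..
  hence sig: "(sigma_r Xs)\<^sup>2 = l" using l0 by simp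
  show "0 \<le> (sigma_r Xs)\<^sup>2" by simp
  show "(sigma_r Xs)\<^sup>2 \<le> 1" using sig lm m1 by simp
  show "(sigma_r Xs)\<^sup>2 * (norm x)\<^sup>2 \<le> (norm (Xs *v x))\<^sup>2" for x
  proof -
    have "l * (norm x)\<^sup>2 \<le> m * (norm x)\<^sup>2" by (rule mult_right_mono[OF lm]) simp
    thus ?thesis using sig hom[of x] by (metis order_trans)
  qed
qed



definition outer :: "real^'m \<Rightarrow> real^'n \<Rightarrow> real^'n^'m" where
  "outer a b = (\<chi> i j. a$i * b$j)"

lemma outer_tr: "transpose (outer a b) = outer b a"
  by (vector outer_def transpose_def)

lemma outer_mul: "outer a b ** outer c e = (b \<bullet> c) *\<^sub>R outer a e"
  by (simp add: vec_eq_iff outer_def matrix_matrix_mult_def inner_vec_def sum_distrib_left sum_distrib_right mult_ac)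

lemma inner_outer: "(M::real^'n^'m) \<bullet> outer a b = a \<bullet> (M *v b)"
  by (simp add: inner_vec_def outer_def matrix_vector_mult_def sum_distrib_left mult_ac)

lemma outer_mat1: "outer a b ** mat 1 = outer a b" "mat 1 ** outer a b = outer a b"
  by simp_all

definition refl_mat :: "real^'n \<Rightarrow> real^'n^'n" where
  "refl_mat v = mat 1 - (2 / (v \<bullet> v)) *\<^sub>R outer v v"

lemma refl_prod: "refl_mat v ** refl_mat u =
   mat 1 - (2 / (v \<bullet> v)) *\<^sub>R outer v v - (2 / (u \<bullet> u)) *\<^sub>R outer u u
   + ((2 / (v \<bullet> v)) * (2 / (u \<bullet> u)) * (v \<bullet> u)) *\<^sub>R outer v u"
  unfolding refl_mat_def
  by (simp add: mm_diff_l mm_diff_r matrix_scalar_ac flip: scalar_matrix_assoc)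
     (simp add: outer_mul algebra_simps)

lemma coef_aux: "mat 1 - c *\<^sub>R P - c *\<^sub>R P + (c * c * w) *\<^sub>R P = mat 1 - (c + c - c * c * w) *\<^sub>R (P::real^'n^'n)"
  unfolding scaleR_diff_left scaleR_add_left by (simp add: algebra_simps)

lemma refl_orth: assumes "v \<noteq> 0" shows "orthogonal_matrix (refl_mat v)"
proof -
  have tr: "transpose (refl_mat v) = refl_mat v"
    by (simp add: refl_mat_def tr_diff transpose_scalar outer_tr)
  have "refl_mat v ** refl_mat v = mat 1"
  proof -
    have vv: "v \<bullet> v \<noteq> 0" using assms by simp
    have "refl_mat v ** refl_mat v = mat 1 - (2 / (v \<bullet> v) + 2 / (v \<bullet> v) - (2 / (v \<bullet> v)) * (2 / (v \<bullet> v)) * (v \<bullet> v)) *\<^sub>R outer v v"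
      unfolding refl_prod by (rule coef_aux)
    also have "(2 / (v \<bullet> v) + 2 / (v \<bullet> v) - (2 / (v \<bullet> v)) * (2 / (v \<bullet> v)) * (v \<bullet> v)) = 0"
      using vv by (simp add: field_simps)
    finally show ?thesis by simp
  qed
  thus ?thesis unfolding orthogonal_matrix tr .
qed

lemma bax: "axis i 1 \<bullet> ((B::real^'n^'n) *v axis j 1) = B$i$j"
  by (simp add: inner_axis' matrix_vector_mul_component inner_axis)

lemma ring_aux:
  fixes a t p q r s :: real
  assumes "a + a * t\<^sup>2 = 2"
  shows "a * (p + t * q + t * r + t\<^sup>2 * s) + 2 * p - a * 2 * (p + t * r) = a * (t * (q - r) + t\<^sup>2 * (p + s))"
proof -
  have "a * (p + t * q + t * r + t\<^sup>2 * s) + 2 * p - a * 2 * (p + t * r) - a * (t * (q - r) + t\<^sup>2 * (p + s))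
     = (2 - (a + a * t\<^sup>2)) * p" by (simp add: algebra_simps)
  thus ?thesis using assms by simp
qed

lemma lin_quad:
  fixes c s :: real
  assumes "\<And>t. 0 \<le> t * c + t\<^sup>2 * s" "0 \<le> s"
  shows "c = 0"
proof -
  define d where "d = s + 1"
  have d: "d > 0" using assms by (simp add: d_def)
  have "0 \<le> (- c / d) * c + (- c / d)\<^sup>2 * s" by (rule assms(1))
  also have "(- c / d) * c + (- c / d)\<^sup>2 * s = (- c\<^sup>2 * d + c\<^sup>2 * s) / d\<^sup>2"
    using d by (simp add: field_simps power2_eq_square)
  also have "- c\<^sup>2 * d + c\<^sup>2 * s = - c\<^sup>2" by (simp add: d_def algebra_simps)
  finally have "0 \<le> - c\<^sup>2 / d\<^sup>2" .
  hence "c\<^sup>2 \<le> 0" using d by (simp add: divide_le_0_iff)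
  thus ?thesis by simp
qed

lemma optimal_cond:
  fixes B :: "real^'n^'n"
  assumes opt: "\<And>Om. orthogonal_matrix Om \<Longrightarrow> B \<bullet> Om \<le> B \<bullet> mat 1"
  shows "\<And>v. 0 \<le> v \<bullet> (B *v v)" "transpose B = B"
proof -
  show psd: "0 \<le> v \<bullet> (B *v v)" for v
  proof (cases "v = 0")
    case True thus ?thesis by simp
  next
    case False
    have "B \<bullet> refl_mat v \<le> B \<bullet> mat 1" using opt refl_orth False by blast
    hence "(2 * (v \<bullet> (B *v v))) / (v \<bullet> v) \<ge> 0"
      by (simp add: refl_mat_def inner_diff_right inner_outer)
    moreover have "v \<bullet> v > 0" using False by simp
    ultimately show ?thesis by (simp add: zero_le_divide_iff)
  qed
  have "B$i$j = B$j$i" for i j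
  proof (cases "i = j")
    case True thus ?thesis by simp
  next
    case False
    have ij: "axis i 1 \<bullet> axis j (1::real) = 0" "axis j 1 \<bullet> axis i (1::real) = 0"
      using False by (simp_all add: inner_axis_axis)
    have key: "0 \<le> t * (B$i$j - B$j$i) + t\<^sup>2 * (B$i$i + B$j$j)" for t
    proof -
      define u :: "real^'n" where "u = axis i 1"
      define v :: "real^'n" where "v = axis i 1 + t *\<^sub>R axis j 1"
      have u0: "u \<noteq> 0" by (simp add: u_def)
      have v0: "v \<noteq> 0"
      proof
        assume "v = 0" hence "v $ i = 0" by simp
        thus False using False by (simp add: v_def axis_def)
      qed
      have "B \<bullet> (refl_mat v ** refl_mat u) \<le> B \<bullet> mat 1"
        using opt orthogonal_matrix_mul refl_orth u0 v0 by blast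
      hence *: "0 \<le> (2 / (v \<bullet> v)) * (v \<bullet> (B *v v)) + (2 / (u \<bullet> u)) * (u \<bullet> (B *v u))
          - ((2 / (v \<bullet> v)) * (2 / (u \<bullet> u)) * (v \<bullet> u)) * (v \<bullet> (B *v u))"
        unfolding refl_prod by (simp add: inner_diff_right inner_add_right inner_outer)
      have uu: "u \<bullet> u = 1" "u \<bullet> (B *v u) = B$i$i" by (simp_all add: u_def bax)
      have vv: "v \<bullet> v = 1 + t\<^sup>2" "v \<bullet> u = 1"
        using ij by (simp_all add: v_def u_def inner_add_left inner_add_right power2_eq_square inner_commute)
      have vb: "v \<bullet> (B *v u) = B$i$i + t * B$j$i" "v \<bullet> (B *v v) = B$i$i + t * B$i$j + t * B$j$i + t\<^sup>2 * B$j$j"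
        by (simp_all add: v_def u_def matrix_vector_right_distrib matrix_vector_mult_scaleR
            inner_add_left inner_add_right bax power2_eq_square algebra_simps)
      have pos: "1 + t\<^sup>2 > 0" by (simp add: add_pos_nonneg)
      define a where "a = 2 / (1 + t\<^sup>2)"
      have "a * (1 + t\<^sup>2) = 2" using a_def nonzero_eq_divide_eq[of "1 + t\<^sup>2" a 2] pos by linarith
      hence a2: "a + a * t\<^sup>2 = 2" by (simp add: distrib_left)
      have apos: "a > 0" using pos by (simp add: a_def)
      have "0 \<le> a * (B$i$i + t * B$i$j + t * B$j$i + t\<^sup>2 * B$j$j) + 2 * B$i$i
          - a * 2 * (B$i$i + t * B$j$i)"
        using * unfolding uu vv vb a_def by simp
      also have "\<dots> = a * (t * (B$i$j - B$j$i) + t\<^sup>2 * (B$i$i + B$j$j))"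
        using a2 by (rule ring_aux)
      finally show ?thesis using apos by (simp add: zero_le_mult_iff)
    qed
    have s: "0 \<le> B$i$i + B$j$j" using psd[of "axis i 1"] psd[of "axis j 1"] by (simp add: bax)
    from lin_quad[OF key s] show ?thesis by simp
  qed
  thus "transpose B = B" by (simp add: vec_eq_iff transpose_def)
qed



lemma orth_compact: "compact {R::real^'n^'n. orthogonal_matrix R}"
proof -
  have eq: "{R::real^'n^'n. orthogonal_matrix R} = {R. (\<chi> i j. \<Sum>k\<in>UNIV. R$k$i * R$k$j) = mat 1}"
    by (simp add: orthogonal_matrix matrix_matrix_mult_def transpose_def)
  have "closed {R::real^'n^'n. (\<chi> i j. \<Sum>k\<in>UNIV. R$k$i * R$k$j) = mat 1}"
    by (rule closed_Collect_eq) (intro continuous_intros)+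
  moreover have "bounded {R::real^'n^'n. orthogonal_matrix R}"
  proof -
    have "norm R \<le> sqrt (real CARD('n))" if "orthogonal_matrix R" for R :: "real^'n^'n"
    proof -
      have r: "norm (R$i) = 1" for i
        using that unfolding orthogonal_matrix_orthonormal_rows row_def by simp
      have "(norm R)\<^sup>2 = real CARD('n)" by (simp add: norm_sq_rows r)
      thus ?thesis by (simp add: real_sqrt_unique)
    qed
    thus ?thesis unfolding bounded_iff by blast
  qed
  ultimately show ?thesis using eq by (simp add: compact_eq_bounded_closed)
qed

lemma opt_R:
  fixes X Xs :: "real^'r^'d"
  obtains R0 where "orthogonal_matrix R0" "dist_Dstar X Xs = norm (X - Xs ** R0)"
    "\<And>Om. orthogonal_matrix Om \<Longrightarrow> (transpose (Xs ** R0) ** X) \<bullet> Om \<le> (transpose (Xs ** R0) ** X) \<bullet> mat 1"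
proof -
  let ?S = "{R::real^'r^'r. orthogonal_matrix R}"
  have ne: "?S \<noteq> {}" using orthogonal_matrix_id by blast
  have fe: "(\<lambda>R. norm (X - Xs ** R)) = (\<lambda>R. norm (X - (\<chi> i j. \<Sum>k\<in>UNIV. Xs$i$k * R$k$j)))"
    by (simp add: matrix_matrix_mult_def)
  have cont: "continuous_on ?S (\<lambda>R. norm (X - Xs ** R))"
    unfolding fe by (intro continuous_intros)+
  obtain R0 where R0: "R0 \<in> ?S" and min: "\<And>R. R \<in> ?S \<Longrightarrow> norm (X - Xs ** R0) \<le> norm (X - Xs ** R)"
    using continuous_attains_inf[OF orth_compact ne cont] by blast
  have d: "dist_Dstar X Xs = norm (X - Xs ** R0)"
    unfolding dist_Dstar_def
    by (rule cInf_eq_minimum) (use R0 min in auto)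
  define U where "U = Xs ** R0"
  define B where "B = transpose U ** X"
  have opt: "B \<bullet> Om \<le> B \<bullet> mat 1" if Om: "orthogonal_matrix Om" for Om
  proof -
    have "R0 ** Om \<in> ?S" using R0 Om orthogonal_matrix_mul by blast
    hence "norm (X - U) \<le> norm (X - U ** Om)" using min[of "R0 ** Om"] unfolding U_def by (simp add: matrix_mul_assoc)
    hence "(X - U) \<bullet> (X - U) \<le> (X - U ** Om) \<bullet> (X - U ** Om)"
      by (simp add: norm_eq_sqrt_inner)
    hence *: "X \<bullet> X - 2 * (X \<bullet> U) + U \<bullet> U \<le> X \<bullet> X - 2 * (X \<bullet> (U ** Om)) + (U ** Om) \<bullet> (U ** Om)"
      by (simp add: inner_diff_left inner_diff_right inner_commute)
    have "(U ** Om) \<bullet> (U ** Om) = U \<bullet> U"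
      using Om by (simp add: adj1 matrix_transpose_mul matrix_mul_assoc[symmetric] orthogonal_matrix_def)
    moreover have "X \<bullet> (U ** Om) = B \<bullet> Om"
      unfolding B_def using adj2[of U Om X] by (simp add: inner_commute)
    moreover have "X \<bullet> U = B \<bullet> mat 1"
      unfolding B_def using adj2[of U "mat 1" X] by (simp add: inner_commute)
    ultimately show ?thesis using * by simp
  qed
  show ?thesis using that R0 d opt unfolding U_def B_def by blast
qed



lemma tr_mm_tr: "transpose (A ** transpose B) = B ** transpose (A::real^'k^'m)"
  by (simp add: matrix_transpose_mul)

lemma tu:
  fixes U X :: "real^'r^'d"
  assumes symB: "transpose (transpose U ** X) = transpose U ** X"
    and psdB: "\<And>v. 0 \<le> v \<bullet> ((transpose U ** X) *v v)"
  shows "(2/3) * (norm ((X - U) ** transpose U))\<^sup>2 \<le> (norm (X ** transpose X - U ** transpose U))\<^sup>2"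
proof -
  define \<Delta> where "\<Delta> = X - U"
  have X: "X = U + \<Delta>" by (simp add: \<Delta>_def)
  define M1 where "M1 = U ** transpose \<Delta>"
  define M2 where "M2 = \<Delta> ** transpose U"
  define M3 where "M3 = \<Delta> ** transpose \<Delta>"
  define P where "P = transpose U ** \<Delta>"
  define Q where "Q = transpose \<Delta> ** \<Delta>"
  define G where "G = transpose U ** U"
  define B where "B = transpose U ** X"
  have A: "X ** transpose X - U ** transpose U = M1 + M2 + M3"
    unfolding X M1_def M2_def M3_def
    by (simp add: tr_add matrix_add_ldistrib mm_add_r algebra_simps)
  have BGP: "B = G + P" unfolding B_def G_def P_def X by (simp add: matrix_add_ldistrib)
  have Gs: "transpose G = G" unfolding G_def by (simp add: matrix_transpose_mul)
  have Bs: "transpose B = B" using symB unfolding B_def .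
  have Ps: "transpose P = P"
  proof -
    have "P = B - G" using BGP by simp
    thus ?thesis using Bs Gs by (simp add: tr_diff)
  qed
  have PT: "transpose P = transpose \<Delta> ** U" unfolding P_def by (simp add: matrix_transpose_mul)
  have M2t: "M2 = transpose M1" unfolding M1_def M2_def by (simp add: tr_mm_tr)
  have M3t: "transpose M3 = M3" unfolding M3_def by (simp add: tr_mm_tr)
  have e11: "M1 \<bullet> M1 = G \<bullet> Q"
  proof -
    have "M1 \<bullet> M1 = U \<bullet> (U ** Q)"
      unfolding M1_def Q_def by (simp add: adj1 matrix_mul_assoc)
    also have "\<dots> = Q \<bullet> G" unfolding G_def using adj2[of U Q U] by (simp add: inner_commute)
    finally show ?thesis by (simp add: inner_commute)
  qed
  have e22: "M2 \<bullet> M2 = G \<bullet> Q" using e11 by (simp add: M2t inner_tr)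
  have e33: "M3 \<bullet> M3 = Q \<bullet> Q"
  proof -
    have "M3 \<bullet> M3 = \<Delta> \<bullet> (\<Delta> ** Q)"
      unfolding M3_def Q_def by (simp add: adj1 matrix_mul_assoc)
    also have "\<dots> = Q \<bullet> Q" using adj2[of \<Delta> Q \<Delta>] unfolding Q_def by (simp add: inner_commute)
    finally show ?thesis .
  qed
  have e12: "M1 \<bullet> M2 = P \<bullet> P"
  proof -
    have "M1 \<bullet> M2 = U \<bullet> (\<Delta> ** P)"
      unfolding M1_def M2_def P_def by (simp add: adj1 matrix_mul_assoc)
    also have "\<dots> = P \<bullet> transpose P" unfolding PT using adj2[of \<Delta> P U] by (simp add: inner_commute)
    finally show ?thesis using Ps by simp
  qed
  have e13: "M1 \<bullet> M3 = P \<bullet> Q"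
  proof -
    have "M1 \<bullet> M3 = U \<bullet> (\<Delta> ** Q)"
      unfolding M1_def M3_def Q_def by (simp add: adj1 matrix_mul_assoc)
    also have "\<dots> = Q \<bullet> transpose P" unfolding PT using adj2[of \<Delta> Q U] by (simp add: inner_commute)
    finally show ?thesis using Ps by (simp add: inner_commute)
  qed
  have e23: "M2 \<bullet> M3 = P \<bullet> Q"
  proof -
    have "M2 \<bullet> M3 = transpose M1 \<bullet> transpose M3" using M2t M3t by simp
    thus ?thesis using e13 by (simp add: inner_tr)
  qed
  have normA: "(norm (X ** transpose X - U ** transpose U))\<^sup>2 = 2 * (G \<bullet> Q) + Q \<bullet> Q + 2 * (P \<bullet> P) + 4 * (P \<bullet> Q)"
    unfolding A power2_norm_eq_inner
    by (simp add: inner_add_left inner_add_right inner_commute[of M2 M1] inner_commute[of M3 M1]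
        inner_commute[of M3 M2] e11 e22 e33 e12 e13 e23)
  have BQ: "0 \<le> B \<bullet> Q"
  proof -
    have "B \<bullet> Q = \<Delta> \<bullet> (\<Delta> ** B)"
      unfolding Q_def using adj2[of "transpose \<Delta>" \<Delta> B] by (simp add: inner_commute)
    also have "\<dots> = (\<Sum>i\<in>UNIV. \<Delta>$i \<bullet> (B *v \<Delta>$i))"
      by (simp add: inner_vec_def[of \<Delta>] mm_row) (metis (no_types) inner_commute dot_lmul_matrix)
    also have "\<dots> \<ge> 0" using psdB by (simp add: sum_nonneg B_def)
    finally show ?thesis by simp
  qed
  have sq: "0 \<le> (Q + (4/3) *\<^sub>R P) \<bullet> (Q + (4/3) *\<^sub>R P)" by simp
  hence sq': "0 \<le> Q \<bullet> Q + (8/3) * (P \<bullet> Q) + (16/9) * (P \<bullet> P)"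
    by (simp add: inner_add_left inner_add_right inner_commute[of Q P] algebra_simps)
  have PP: "0 \<le> P \<bullet> P" by simp
  have PQ: "- (G \<bullet> Q) \<le> P \<bullet> Q" using BQ unfolding BGP by (simp add: inner_add_left)
  have "(2/3) * (G \<bullet> Q) \<le> (norm (X ** transpose X - U ** transpose U))\<^sup>2"
    unfolding normA using sq' PP PQ by linarith
  moreover have "(norm ((X - U) ** transpose U))\<^sup>2 = G \<bullet> Q"
    using e22 unfolding M2_def \<Delta>_def by (simp add: power2_norm_eq_inner)
  ultimately show ?thesis by simp
qed



lemma sum_le_sqrt_card:
  fixes d :: "'a \<Rightarrow> real"
  shows "(\<Sum>j\<in>T. \<bar>d j\<bar>) \<le> sqrt (card T) * sqrt (\<Sum>j\<in>T. (d j)\<^sup>2)"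
proof -
  have "(\<Sum>j\<in>T. \<bar>d j\<bar> * 1)\<^sup>2 \<le> (\<Sum>j\<in>T. \<bar>d j\<bar>\<^sup>2) * (\<Sum>j\<in>T. 1\<^sup>2)"
    by (rule Cauchy_Schwarz_ineq_sum)
  hence "(\<Sum>j\<in>T. \<bar>d j\<bar>)\<^sup>2 \<le> card T * (\<Sum>j\<in>T. (d j)\<^sup>2)" by (simp add: mult.commute)
  hence "(\<Sum>j\<in>T. \<bar>d j\<bar>) \<le> sqrt (card T * (\<Sum>j\<in>T. (d j)\<^sup>2))" by (rule real_le_rsqrt)
  thus ?thesis by (simp add: real_sqrt_mult)
qed

lemma cone:
  fixes s t :: "'a::finite \<Rightarrow> real"
  assumes le: "(\<Sum>j\<in>UNIV. \<bar>s j\<bar>) \<le> (\<Sum>j\<in>UNIV. \<bar>t j\<bar>)" and ck: "card {j. t j \<noteq> 0} \<le> k"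
  shows "(\<Sum>j\<in>UNIV. \<bar>s j - t j\<bar>) \<le> 2 * sqrt k * sqrt (\<Sum>j\<in>UNIV. (s j - t j)\<^sup>2)"
proof -
  define T where "T = {j. t j \<noteq> 0}"
  have split: "(\<Sum>j\<in>UNIV. f j) = (\<Sum>j\<in>T. f j) + (\<Sum>j\<in>UNIV - T. f j)" for f :: "'a \<Rightarrow> real"
    using sum.Int_Diff[of UNIV f T] by simp
  have off: "t j = 0" if "j \<in> UNIV - T" for j using that by (simp add: T_def)
  have e1: "(\<Sum>j\<in>UNIV - T. \<bar>s j - t j\<bar>) = (\<Sum>j\<in>UNIV - T. \<bar>s j\<bar>)" by (rule sum.cong) (simp_all add: off)
  have e2: "(\<Sum>j\<in>UNIV - T. \<bar>t j\<bar>) = 0" by (rule sum.neutral) (simp add: off)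
  have tri: "(\<Sum>j\<in>T. \<bar>t j\<bar>) \<le> (\<Sum>j\<in>T. \<bar>s j\<bar>) + (\<Sum>j\<in>T. \<bar>s j - t j\<bar>)"
    unfolding sum.distrib[symmetric] by (rule sum_mono) linarith
  have "(\<Sum>j\<in>T. \<bar>s j\<bar>) + (\<Sum>j\<in>UNIV - T. \<bar>s j\<bar>) \<le> (\<Sum>j\<in>T. \<bar>t j\<bar>)"
    using le split[of "\<lambda>j. \<bar>s j\<bar>"] split[of "\<lambda>j. \<bar>t j\<bar>"] e2 by simp
  hence "(\<Sum>j\<in>UNIV. \<bar>s j - t j\<bar>) \<le> 2 * (\<Sum>j\<in>T. \<bar>s j - t j\<bar>)"
    using split[of "\<lambda>j. \<bar>s j - t j\<bar>"] e1 tri by simp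
  also have "(\<Sum>j\<in>T. \<bar>s j - t j\<bar>) \<le> sqrt (card T) * sqrt (\<Sum>j\<in>T. (s j - t j)\<^sup>2)"
    by (rule sum_le_sqrt_card)
  also have "\<dots> \<le> sqrt k * sqrt (\<Sum>j\<in>UNIV. (s j - t j)\<^sup>2)"
  proof (rule mult_mono)
    show "sqrt (card T) \<le> sqrt k" using ck by (simp add: T_def)
    show "sqrt (\<Sum>j\<in>T. (s j - t j)\<^sup>2) \<le> sqrt (\<Sum>j\<in>UNIV. (s j - t j)\<^sup>2)"
      by (simp add: sum_mono2)
  qed (simp_all add: sum_nonneg)
  finally show ?thesis by simp
qed

lemma sym_entry: "transpose (D::real^'n^'n) = D \<Longrightarrow> D$i$j = D$j$i"
  by (metis transpose_def vec_lambda_beta)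

lemma cross:
  fixes X U \<Delta> :: "real^'r^'d" and D :: "real^'d^'d"
  assumes rX: "\<And>i. norm (X$i) \<le> a" and rU: "\<And>i. norm (U$i) \<le> a" and sD: "transpose D = D"
  shows "\<bar>(X ** transpose \<Delta> + \<Delta> ** transpose U) \<bullet> D\<bar> \<le> 2 * a * (\<Sum>j\<in>UNIV. norm (\<Delta>$j) * col_l1 D j)"
proof -
  have a0: "0 \<le> a" using rX[of undefined] norm_ge_zero order_trans by blast
  have h1: "\<bar>(X ** transpose \<Delta>) \<bullet> D\<bar> \<le> a * (\<Sum>j\<in>UNIV. norm (\<Delta>$j) * col_l1 D j)"
  proof -
    have "\<bar>(X ** transpose \<Delta>) \<bullet> D\<bar> = \<bar>\<Sum>i\<in>UNIV. \<Sum>j\<in>UNIV. (X$i \<bullet> \<Delta>$j) * D$i$j\<bar>"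
      by (simp add: inner_mat mm_entry)
    also have "\<dots> \<le> (\<Sum>i\<in>UNIV. \<Sum>j\<in>UNIV. a * norm (\<Delta>$j) * \<bar>D$i$j\<bar>)"
    proof -
      have "\<bar>(X$i \<bullet> \<Delta>$j) * D$i$j\<bar> \<le> a * norm (\<Delta>$j) * \<bar>D$i$j\<bar>" for i j
      proof -
        have "\<bar>X$i \<bullet> \<Delta>$j\<bar> \<le> norm (X$i) * norm (\<Delta>$j)" by (rule Cauchy_Schwarz_ineq2)
        also have "\<dots> \<le> a * norm (\<Delta>$j)" by (rule mult_right_mono[OF rX]) simp
        finally show ?thesis by (simp add: abs_mult mult_right_mono)
      qed
      hence "\<bar>\<Sum>j\<in>UNIV. (X$i \<bullet> \<Delta>$j) * D$i$j\<bar> \<le> (\<Sum>j\<in>UNIV. a * norm (\<Delta>$j) * \<bar>D$i$j\<bar>)" for i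
        by (rule order_trans[OF sum_abs sum_mono])
      thus ?thesis by (rule order_trans[OF sum_abs sum_mono])
    qed
    also have "\<dots> = (\<Sum>j\<in>UNIV. \<Sum>i\<in>UNIV. a * norm (\<Delta>$j) * \<bar>D$i$j\<bar>)" by (rule sum.swap)
    also have "\<dots> = a * (\<Sum>j\<in>UNIV. norm (\<Delta>$j) * col_l1 D j)"
      by (simp add: col_l1_def sum_distrib_left mult_ac)
    finally show ?thesis .
  qed
  have h2: "\<bar>(\<Delta> ** transpose U) \<bullet> D\<bar> \<le> a * (\<Sum>j\<in>UNIV. norm (\<Delta>$j) * col_l1 D j)"
  proof -
    have "\<bar>(\<Delta> ** transpose U) \<bullet> D\<bar> = \<bar>\<Sum>i\<in>UNIV. \<Sum>j\<in>UNIV. (\<Delta>$i \<bullet> U$j) * D$i$j\<bar>"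
      by (simp add: inner_mat mm_entry)
    also have "\<dots> \<le> (\<Sum>i\<in>UNIV. \<Sum>j\<in>UNIV. a * norm (\<Delta>$i) * \<bar>D$j$i\<bar>)"
    proof -
      have "\<bar>(\<Delta>$i \<bullet> U$j) * D$i$j\<bar> \<le> a * norm (\<Delta>$i) * \<bar>D$j$i\<bar>" for i j
      proof -
        have "\<bar>\<Delta>$i \<bullet> U$j\<bar> \<le> norm (\<Delta>$i) * norm (U$j)" by (rule Cauchy_Schwarz_ineq2)
        also have "\<dots> \<le> norm (\<Delta>$i) * a" by (rule mult_left_mono[OF rU]) simp
        finally have "\<bar>\<Delta>$i \<bullet> U$j\<bar> * \<bar>D$j$i\<bar> \<le> norm (\<Delta>$i) * a * \<bar>D$j$i\<bar>"
          by (rule mult_right_mono) simp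
        thus ?thesis using sym_entry[OF sD, of i j] by (simp add: abs_mult mult_ac)
      qed
      hence "\<bar>\<Sum>j\<in>UNIV. (\<Delta>$i \<bullet> U$j) * D$i$j\<bar> \<le> (\<Sum>j\<in>UNIV. a * norm (\<Delta>$i) * \<bar>D$j$i\<bar>)" for i
        by (rule order_trans[OF sum_abs sum_mono])
      thus ?thesis by (rule order_trans[OF sum_abs sum_mono])
    qed
    also have "\<dots> = a * (\<Sum>j\<in>UNIV. norm (\<Delta>$j) * col_l1 D j)"
      by (simp add: col_l1_def sum_distrib_left mult_ac)
    finally show ?thesis .
  qed
  have "\<bar>(X ** transpose \<Delta> + \<Delta> ** transpose U) \<bullet> D\<bar> \<le> \<bar>(X ** transpose \<Delta>) \<bullet> D\<bar> + \<bar>(\<Delta> ** transpose U) \<bullet> D\<bar>"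
    by (simp add: inner_add_left abs_triangle_ineq)
  thus ?thesis using h1 h2 by simp
qed

lemma phi:
  fixes \<Delta> :: "real^'r^'d" and D :: "real^'d^'d"
  assumes "\<And>j. col_l1 D j \<le> c * norm (D$j)" "0 \<le> c"
  shows "(\<Sum>j\<in>UNIV. norm (\<Delta>$j) * col_l1 D j) \<le> c * (norm \<Delta> * norm D)"
proof -
  have "(\<Sum>j\<in>UNIV. norm (\<Delta>$j) * col_l1 D j) \<le> (\<Sum>j\<in>UNIV. c * (norm (\<Delta>$j) * norm (D$j)))"
    by (rule sum_mono) (metis assms(1) mult.left_commute mult_left_mono norm_ge_zero)
  also have "\<dots> = c * (\<Sum>j\<in>UNIV. norm (\<Delta>$j) * norm (D$j))" by (simp add: sum_distrib_left)
  also have "(\<Sum>j\<in>UNIV. norm (\<Delta>$j) * norm (D$j)) \<le> norm \<Delta> * norm D"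
  proof -
    have "(\<Sum>j\<in>UNIV. norm (\<Delta>$j) * norm (D$j))\<^sup>2 \<le> (\<Sum>j\<in>UNIV. (norm (\<Delta>$j))\<^sup>2) * (\<Sum>j\<in>UNIV. (norm (D$j))\<^sup>2)"
      by (rule Cauchy_Schwarz_ineq_sum)
    also have "\<dots> = (norm \<Delta> * norm D)\<^sup>2" by (simp add: norm_sq_rows power_mult_distrib)
    finally show ?thesis by (rule power2_le_imp_le) simp
  qed
  hence "c * (\<Sum>j\<in>UNIV. norm (\<Delta>$j) * norm (D$j)) \<le> c * (norm \<Delta> * norm D)"
    by (rule mult_left_mono[OF _ assms(2)])
  finally show ?thesis .
qed

lemma row_bound: "norm_2inf (X::real^'r^'d) \<le> a \<Longrightarrow> norm (X$i) \<le> a"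
proof -
  assume a: "norm_2inf X \<le> a"
  have "norm (X$i) \<le> Max (range (\<lambda>i. norm (X$i)))" by (rule Max_ge) auto
  thus ?thesis using a unfolding norm_2inf_def by simp
qed

lemma frob_bound:
  fixes X :: "real^'r^'d"
  fixes \<nu> :: real
  assumes "\<And>i. norm (X$i) \<le> sqrt (\<nu> * CARD('r) / CARD('d))" "0 \<le> \<nu>"
  shows "norm X \<le> sqrt (\<nu> * CARD('r))"
proof -
  have "(norm X)\<^sup>2 \<le> (\<Sum>i\<in>(UNIV::'d set). \<nu> * CARD('r) / CARD('d))"
    unfolding norm_sq_rows
  proof (rule sum_mono)
    fix i
    have "(norm (X$i))\<^sup>2 \<le> (sqrt (\<nu> * CARD('r) / CARD('d)))\<^sup>2"
      by (rule power_mono[OF assms(1)]) simp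
    thus "(norm (X$i))\<^sup>2 \<le> \<nu> * CARD('r) / CARD('d)" using assms(2) by simp
  qed
  also have "\<dots> = \<nu> * CARD('r)" by simp
  finally show ?thesis by (rule real_le_rsqrt)
qed



theorem lemma8p2:
  fixes Xs :: "real^'r^'d" and Ss :: "real^'d^'d" and \<nu> :: real and k :: nat
  assumes "k > 0" and "\<nu> > 0"
    and "rank Xs = CARD('r)"
    and "op_norm Xs \<le> 1"
    and "norm_2inf Xs \<le> sqrt (\<nu> * CARD('r) / CARD('d))"
    and "transpose Ss = Ss"
    and "\<forall>i. card {j. Ss $ j $ i \<noteq> 0} \<le> k"
  defines "W \<equiv> Xs ** transpose Xs + Ss"
  defines "Xset \<equiv> {X :: real^'r^'d. norm_2inf X \<le> sqrt (\<nu> * CARD('r) / CARD('d))}"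
  defines "Sset \<equiv> {S :: real^'d^'d. transpose S = S \<and> (\<forall>i. col_l1 S i \<le> col_l1 Ss i)}"
  defines "F \<equiv> \<lambda>(X :: real^'r^'d, S :: real^'d^'d). norm (X ** transpose X + S - W)"
  defines "FY \<equiv> \<lambda>(Y :: real^'r^'d) (X :: real^'r^'d, S :: real^'d^'d).
             norm (Y ** transpose Y + Y ** transpose (X - Y) + (X - Y) ** transpose Y + S - W)"
  shows "(\<forall>X\<in>Xset. \<forall>Y\<in>Xset. \<forall>S\<in>Sset.
            (F (X, S))\<^sup>2 \<ge> ((1/2) * (sigma_r Xs)\<^sup>2 - 10 * sqrt (\<nu> * CARD('r) * k / CARD('d)))
                          * ((dist_Dstar X Xs)\<^sup>2 + (norm (S - Ss))\<^sup>2)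
          \<and> \<bar>F (X, S) - FY Y (X, S)\<bar> \<le> (norm (X - Y))\<^sup>2)
       \<and> (\<forall>X1\<in>Xset. \<forall>X2\<in>Xset. \<forall>S1\<in>Sset. \<forall>S2\<in>Sset.
            \<bar>F (X1, S1) - F (X2, S2)\<bar> \<le> 2 * sqrt (\<nu> * CARD('r)) * norm (X1 - X2) + norm (S1 - S2))"
proof -
  define a where "a = sqrt (\<nu> * CARD('r) / CARD('d))"
  define \<epsilon> where "\<epsilon> = sqrt (\<nu> * CARD('r) * k / CARD('d))"
  have \<nu>0: "0 \<le> \<nu>" using assms(2) by simp
  have a0: "0 \<le> a" unfolding a_def using \<nu>0 by simp
  have e0: "0 \<le> \<epsilon>" unfolding \<epsilon>_def using \<nu>0 by simp
  have ak: "a * sqrt k = \<epsilon>"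
  proof -
    have "a * sqrt k = sqrt (\<nu> * CARD('r) / CARD('d) * k)" unfolding a_def by (rule real_sqrt_mult[symmetric])
    also have "\<nu> * CARD('r) / CARD('d) * k = \<nu> * CARD('r) * k / CARD('d)" by simp
    finally show ?thesis unfolding \<epsilon>_def .
  qed
  have rowX: "norm (X$i) \<le> a" if "X \<in> Xset" for X i
    using that unfolding Xset_def a_def using row_bound by blast
  have froX: "norm X \<le> sqrt (\<nu> * CARD('r))" if "X \<in> Xset" for X
    using frob_bound[of X \<nu>] rowX[OF that] \<nu>0 unfolding a_def by blast
  have Fe: "F (X,S) = norm (X ** transpose X + S - W)" for X S unfolding F_def by simp
  have FYe: "FY Y (X,S) = norm (Y ** transpose Y + Y ** transpose (X - Y) + (X - Y) ** transpose Y + S - W)"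
    for Y X S unfolding FY_def by simp
  have P2: "\<bar>F (X, S) - FY Y (X, S)\<bar> \<le> (norm (X - Y))\<^sup>2" for X Y S
  proof -
    define E where "E = X - Y"
    have XE: "X = Y + E" by (simp add: E_def)
    have "(X ** transpose X + S - W) - (Y ** transpose Y + Y ** transpose (X - Y) + (X - Y) ** transpose Y + S - W)
       = E ** transpose E"
      unfolding XE by (simp add: tr_add matrix_add_ldistrib mm_add_r algebra_simps)
    hence "\<bar>F (X, S) - FY Y (X, S)\<bar> \<le> norm (E ** transpose E)"
      unfolding Fe FYe by (metis norm_triangle_ineq3)
    also have "\<dots> \<le> norm E * norm (transpose E)" by (rule frob_submult)
    finally show ?thesis by (simp add: norm_tr E_def power2_eq_square)
  qed
  have P3: "\<bar>F (X1, S1) - F (X2, S2)\<bar> \<le> 2 * sqrt (\<nu> * CARD('r)) * norm (X1 - X2) + norm (S1 - S2)"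
    if X1: "X1 \<in> Xset" and X2: "X2 \<in> Xset" for X1 X2 S1 S2
  proof -
    define E where "E = X1 - X2"
    have XE: "X1 = X2 + E" by (simp add: E_def)
    have eq: "(X1 ** transpose X1 + S1 - W) - (X2 ** transpose X2 + S2 - W)
       = X1 ** transpose E + E ** transpose X2 + (S1 - S2)"
      unfolding XE by (simp add: tr_add matrix_add_ldistrib mm_add_r algebra_simps)
    have "\<bar>F (X1, S1) - F (X2, S2)\<bar> \<le> norm (X1 ** transpose E + E ** transpose X2 + (S1 - S2))"
      unfolding Fe eq[symmetric] by (rule norm_triangle_ineq3)
    also have "\<dots> \<le> norm (X1 ** transpose E) + norm (E ** transpose X2) + norm (S1 - S2)"
      by (meson add_mono_thms_linordered_semiring(3) norm_triangle_ineq order_trans)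
    also have "norm (X1 ** transpose E) \<le> sqrt (\<nu> * CARD('r)) * norm E"
    proof -
      have "norm (X1 ** transpose E) \<le> norm X1 * norm E" using frob_submult[of X1 "transpose E"] by (simp add: norm_tr)
      also have "\<dots> \<le> sqrt (\<nu> * CARD('r)) * norm E" by (rule mult_right_mono[OF froX[OF X1]]) simp
      finally show ?thesis .
    qed
    also have "norm (E ** transpose X2) \<le> sqrt (\<nu> * CARD('r)) * norm E"
    proof -
      have "norm (E ** transpose X2) \<le> norm E * norm X2" using frob_submult[of E "transpose X2"] by (simp add: norm_tr)
      also have "\<dots> \<le> norm E * sqrt (\<nu> * CARD('r))" by (rule mult_left_mono[OF froX[OF X2]]) simp
      finally show ?thesis by (simp add: mult.commute)
    qed
    finally show ?thesis by (simp add: E_def mult_ac)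
  qed
  have sig0: "0 \<le> (sigma_r Xs)\<^sup>2" and sig1: "(sigma_r Xs)\<^sup>2 \<le> 1"
    and sigx: "\<And>x. (sigma_r Xs)\<^sup>2 * (norm x)\<^sup>2 \<le> (norm (Xs *v x))\<^sup>2"
    using sigma_lemma[OF assms(4)] by auto
  have P1: "(F (X, S))\<^sup>2 \<ge> ((1/2) * (sigma_r Xs)\<^sup>2 - 10 * sqrt (\<nu> * CARD('r) * k / CARD('d)))
                          * ((dist_Dstar X Xs)\<^sup>2 + (norm (S - Ss))\<^sup>2)"
    if XX: "X \<in> Xset" and SS: "S \<in> Sset" for X S
  proof -
    obtain R0 where R0: "orthogonal_matrix R0" and dd: "dist_Dstar X Xs = norm (X - Xs ** R0)"
      and opt: "\<And>Om. orthogonal_matrix Om \<Longrightarrow> (transpose (Xs ** R0) ** X) \<bullet> Om \<le> (transpose (Xs ** R0) ** X) \<bullet> mat 1"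
      using opt_R[of X Xs] by blast
    define U where "U = Xs ** R0"
    define \<Delta> where "\<Delta> = X - U"
    define D where "D = S - Ss"
    define l where "l = (sigma_r Xs)\<^sup>2"
    have psd: "\<And>v. 0 \<le> v \<bullet> ((transpose U ** X) *v v)" and sym: "transpose (transpose U ** X) = transpose U ** X"
      using optimal_cond[OF opt] unfolding U_def by auto
    have tuI: "(2/3) * (norm (\<Delta> ** transpose U))\<^sup>2 \<le> (norm (X ** transpose X - U ** transpose U))\<^sup>2"
      using tu[OF sym psd] unfolding \<Delta>_def .
    have low: "l * (norm \<Delta>)\<^sup>2 \<le> (norm (\<Delta> ** transpose U))\<^sup>2"
    proof -
      have "l * (norm \<Delta>)\<^sup>2 = (\<Sum>i\<in>UNIV. l * (norm (R0 *v \<Delta>$i))\<^sup>2)"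
        by (simp add: norm_sq_rows sum_distrib_left orth_norm[OF R0])
      also have "\<dots> \<le> (\<Sum>i\<in>UNIV. (norm (Xs *v (R0 *v \<Delta>$i)))\<^sup>2)"
        by (rule sum_mono) (simp add: l_def sigx)
      also have "\<dots> = (norm (\<Delta> ** transpose U))\<^sup>2"
        by (simp add: norm_sq_rows mm_row U_def matrix_vector_mul_assoc)
      finally show ?thesis .
    qed
    have UU: "U ** transpose U = Xs ** transpose Xs"
      using R0 unfolding U_def orthogonal_matrix_def
      by (simp add: matrix_transpose_mul matrix_mul_assoc) (metis matrix_mul_assoc matrix_mul_rid)
    have rowU: "norm (U$i) \<le> a" for i
    proof -
      have "U$i = transpose R0 *v Xs$i" by (simp add: U_def mm_row)
      hence "norm (U$i) = norm (Xs$i)" using R0 orth_norm[of "transpose R0" "Xs$i"] by simp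
      also have "\<dots> \<le> a" unfolding a_def using assms(5) by (rule row_bound)
      finally show ?thesis .
    qed
    have Ssym: "transpose S = S" using SS unfolding Sset_def by simp
    have sD: "transpose D = D" unfolding D_def using Ssym assms(6) by (simp add: tr_diff)
    have coneD: "col_l1 D j \<le> (2 * sqrt k) * norm (D$j)" for j
    proof -
      have c1: "(\<Sum>i\<in>UNIV. \<bar>S$i$j\<bar>) \<le> (\<Sum>i\<in>UNIV. \<bar>Ss$i$j\<bar>)" using SS unfolding Sset_def col_l1_def by simp
      have c2: "card {i. Ss$i$j \<noteq> 0} \<le> k" using assms(7) by simp
      have "col_l1 D j \<le> 2 * sqrt k * sqrt (\<Sum>i\<in>UNIV. (S$i$j - Ss$i$j)\<^sup>2)"
        using cone[OF c1 c2] unfolding col_l1_def D_def by simp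
      also have "(\<Sum>i\<in>UNIV. (S$i$j - Ss$i$j)\<^sup>2) = (\<Sum>i\<in>UNIV. (D$j$i)\<^sup>2)"
        using sym_entry[OF sD] unfolding D_def by (metis (no_types) vector_minus_component)
      also have "sqrt \<dots> = norm (D$j)" by (simp add: norm_eq_sqrt_inner inner_vec_def power2_eq_square)
      finally show ?thesis by simp
    qed
    have Aeq: "X ** transpose X - U ** transpose U = X ** transpose \<Delta> + \<Delta> ** transpose U"
    proof -
      have XE: "X = U + \<Delta>" by (simp add: \<Delta>_def)
      show ?thesis unfolding XE by (simp add: tr_add matrix_add_ldistrib mm_add_r algebra_simps)
    qed
    define A where "A = X ** transpose X - U ** transpose U"
    have cr: "\<bar>A \<bullet> D\<bar> \<le> 4 * (\<epsilon> * (norm \<Delta> * norm D))"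
    proof -
      have "\<bar>A \<bullet> D\<bar> \<le> 2 * a * (\<Sum>j\<in>UNIV. norm (\<Delta>$j) * col_l1 D j)"
        unfolding A_def Aeq by (rule cross[OF rowX[OF XX] rowU sD])
      also have "\<dots> \<le> 2 * a * ((2 * sqrt k) * (norm \<Delta> * norm D))"
        by (rule mult_left_mono[OF phi[OF coneD]]) (simp_all add: a0)
      also have "\<dots> = 4 * ((a * sqrt k) * (norm \<Delta> * norm D))" by (simp add: algebra_simps)
      finally show ?thesis unfolding ak .
    qed
    have cr': "- (4 * (\<epsilon> * (norm \<Delta> * norm D))) \<le> A \<bullet> D" using cr by (simp add: abs_le_iff)
    have FX: "F (X, S) = norm (A + D)"
      unfolding Fe A_def D_def W_def UU by (simp add: algebra_simps)
    have F2: "(F (X, S))\<^sup>2 = (norm A)\<^sup>2 + 2 * (A \<bullet> D) + (norm D)\<^sup>2"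
      unfolding FX power2_norm_eq_inner by (simp add: inner_add_left inner_add_right inner_commute)
    have nA: "(2/3) * (l * (norm \<Delta>)\<^sup>2) \<le> (norm A)\<^sup>2"
      using tuI low unfolding A_def by linarith
    define x where "x = (norm \<Delta>)\<^sup>2"
    define y where "y = (norm D)\<^sup>2"
    have sqd: "0 \<le> (norm \<Delta> - norm D)\<^sup>2" by simp
    have pxy: "2 * (norm \<Delta> * norm D) \<le> x + y" unfolding x_def y_def
      using sqd by (simp add: power2_diff algebra_simps)
    have ep: "2 * (\<epsilon> * (norm \<Delta> * norm D)) \<le> \<epsilon> * x + \<epsilon> * y"
      using mult_left_mono[OF pxy e0] by (simp add: algebra_simps)
    have l0: "0 \<le> l" and l1: "l \<le> 1" using sig0 sig1 by (simp_all add: l_def)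
    have ly: "l * y \<le> y" using mult_right_mono[OF l1, of y] by (simp add: y_def)
    have y0: "0 \<le> y" by (simp add: y_def)
    have lx: "0 \<le> l * x" using l0 by (simp add: x_def)
    have ex: "0 \<le> \<epsilon> * x" "0 \<le> \<epsilon> * y" using e0 by (simp_all add: x_def y_def)
    have expand: "((1/2) * l - 10 * \<epsilon>) * (x + y) = (1/2) * (l * x) + (1/2) * (l * y) - 10 * (\<epsilon> * x) - 10 * (\<epsilon> * y)"
      by (simp add: algebra_simps)
    have "((1/2) * l - 10 * \<epsilon>) * (x + y) \<le> (F (X, S))\<^sup>2"
      unfolding expand F2 using nA cr' ep ly lx ex y0 unfolding x_def[symmetric] y_def[symmetric] by linarith
    thus ?thesis unfolding dd l_def \<epsilon>_def x_def y_def U_def[symmetric] \<Delta>_def[symmetric] D_def[symmetric] .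
  qed
  show ?thesis using P1 P2 P3 by blast
qed


end
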